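(* Let $M\subset\mathbb{C}^N\subset\mathbb{C}\mathbb{P}^N$ be a strictly $\mathbb{C}$-convex real hypersurface (of class $C^h$, $h\geq 2$). Then the complex dual map $\nu\colon M\to\mathbb{C}\mathbb{P}^{N*}$ is a local embedding.
   Context: For a real hypersurface $M\subset\mathbb{C}^N$ and $x\in M$, $D_x=T_xM\cap JT_xM$ is the complex tangent hyperplane. $M$ is strictly $\mathbb{C}$-convex if at every point $x$ the restriction to $D_x$ of the shape operator (second fundamental form) of $M$ is strictly positive definite (for a suitable choice of unit normal, e.g. the inward normal when $M$ bounds a domain). The complex dual map sends $x\in M$ to the projective hyperplane of $\mathbb{C}\mathbb{P}^N$ which is the closure of the complex affine hyperplane $x+D_x$, viewed as a point of the dual projective space $\mathbb{C}\mathbb{P}^{N*}$. *)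

theory Defs
  imports "HOL-Analysis.Analysis"
begin

text \<open>Complex affine space C^N is modelled as complex ^ 'n (N = CARD('n)),
viewed as a real Euclidean space of real dimension 2N with the standard inner product.\<close>

definition C2_on :: "('a::euclidean_space) set \<Rightarrow> ('a \<Rightarrow> real) \<Rightarrow> bool" where
  "C2_on U \<rho> \<longleftrightarrow> (\<exists>\<rho>' :: 'a \<Rightarrow> ('a \<Rightarrow>\<^sub>L real). \<exists>\<rho>'' :: 'a \<Rightarrow> ('a \<Rightarrow>\<^sub>L ('a \<Rightarrow>\<^sub>L real)).
      (\<forall>y\<in>U. (\<rho> has_derivative blinfun_apply (\<rho>' y)) (at y)) \<and>
      (\<forall>y\<in>U. (\<rho>' has_derivative blinfun_apply (\<rho>'' y)) (at y)) \<and>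
      continuous_on U \<rho>'')"

definition real_hypersurface :: "('a::euclidean_space) set \<Rightarrow> bool" where
  "real_hypersurface M \<longleftrightarrow> (\<forall>x\<in>M. \<exists>U \<rho>. open U \<and> x \<in> U \<and> C2_on U \<rho> \<and>
      M \<inter> U = {y\<in>U. \<rho> y = 0} \<and>
      (\<forall>y\<in>M \<inter> U. \<exists>L. (\<rho> has_derivative L) (at y) \<and> L \<noteq> (\<lambda>_. 0)))"

definition tangent_space :: "('a::real_normed_vector) set \<Rightarrow> 'a \<Rightarrow> 'a set" where
  "tangent_space M x = {v. \<exists>\<gamma> e. e > 0 \<and> \<gamma> 0 = x \<and> (\<forall>t. \<bar>t\<bar> < e \<longrightarrow> \<gamma> t \<in> M) \<and>
      (\<gamma> has_vector_derivative v) (at 0)}"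

definition Jmul :: "complex ^ 'n \<Rightarrow> complex ^ 'n" where
  "Jmul v = (\<chi> j. \<i> * v $ j)"

definition complex_tangent :: "(complex ^ 'n) set \<Rightarrow> complex ^ 'n \<Rightarrow> (complex ^ 'n) set" where
  "complex_tangent M x = tangent_space M x \<inter> Jmul ` tangent_space M x"

text \<open>Strict C-convexity: at every point, for a suitable (local) unit normal field n,
the shape operator S = -Dn restricted to D_x is positive definite.\<close>
definition strictly_C_convex :: "(complex ^ 'n) set \<Rightarrow> bool" where
  "strictly_C_convex M \<longleftrightarrow> real_hypersurface M \<and>
     (\<forall>x\<in>M. \<exists>V n Dn. open V \<and> x \<in> V \<and>
        (\<forall>y\<in>M \<inter> V. norm (n y) = 1 \<and> (\<forall>w\<in>tangent_space M y. n y \<bullet> w = 0)) \<and>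
        (n has_derivative Dn) (at x within M \<inter> V) \<and>
        (\<forall>v\<in>complex_tangent M x. v \<noteq> 0 \<longrightarrow> - (Dn v \<bullet> v) > 0))"

text \<open>Its closure in CP^N
is the point of the dual projective space; closure is injective on affine hyperplanes,
so we identify the point of CP^N* with the affine hyperplane itself.\<close>
definition complex_dual :: "(complex ^ 'n) set \<Rightarrow> complex ^ 'n \<Rightarrow> (complex ^ 'n) set" where
  "complex_dual M x = (\<lambda>v. x + v) ` complex_tangent M x"

text \<open>Standard affine charts of CP^N*: hyperplanes {z. a.z + b = 0} with a_k \<noteq> 0 get the
coordinates c_j = a_j / a_k (j \<noteq> k), c_k = b / a_k.\<close>
definition is_chart_coord :: "'n \<Rightarrow> (complex ^ 'n) set \<Rightarrow> complex ^ 'n \<Rightarrow> bool" where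
  "is_chart_coord k H c \<longleftrightarrow>
     H = {z. z $ k + (\<Sum>j\<in>UNIV - {k}. c $ j * z $ j) + c $ k = 0}"

definition chart_dom :: "'n \<Rightarrow> (complex ^ 'n) set set" where
  "chart_dom k = {H. \<exists>c. is_chart_coord k H c}"

definition dual_chart :: "'n \<Rightarrow> (complex ^ 'n) set \<Rightarrow> complex ^ 'n" where
  "dual_chart k H = (THE c. is_chart_coord k H c)"

definition local_embedding_dual :: "(complex ^ 'n) set \<Rightarrow> (complex ^ 'n \<Rightarrow> (complex ^ 'n) set) \<Rightarrow> bool" where
  "local_embedding_dual M f \<longleftrightarrow> (\<forall>x\<in>M. \<exists>V k. open V \<and> x \<in> V \<and>
      (\<forall>y\<in>M \<inter> V. f y \<in> chart_dom k) \<and>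
      (let g = dual_chart k \<circ> f in
        inj_on g (M \<inter> V) \<and>
        continuous_on (M \<inter> V) g \<and>
        continuous_on (g ` (M \<inter> V)) (inv_into (M \<inter> V) g) \<and>
        (\<forall>y\<in>M \<inter> V. \<exists>L. (g has_derivative L) (at y within M) \<and>
                        inj_on L (tangent_space M y))))"

end

theory Submission
  imports Defs
begin


lemma cont_ball_pre:
  fixes \<gamma> :: "'b::metric_space \<Rightarrow> 'a::metric_space"
  assumes "isCont \<gamma> t0" "open U" "\<gamma> t0 \<in> U"
  obtains d where "d > 0" "\<And>t. dist t t0 < d \<Longrightarrow> \<gamma> t \<in> U"
proof -
  obtain r where r: "r > 0" "ball (\<gamma> t0) r \<subseteq> U" using assms openE by blast
  obtain d where "d > 0" "\<And>t. dist t t0 < d \<Longrightarrow> dist (\<gamma> t) (\<gamma> t0) < r"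
    using assms(1) r(1) unfolding continuous_at_eps_delta by blast
  then show ?thesis using that r(2) by (auto simp: dist_commute subset_iff)
qed

lemma tangent_sub_ker:
  fixes \<rho> :: "'a::euclidean_space \<Rightarrow> real"
  assumes U: "open U" and yU: "y \<in> U" and MU: "M \<inter> U = {z\<in>U. \<rho> z = 0}"
    and d: "(\<rho> has_derivative L) (at y)" and v: "v \<in> tangent_space M y"
  shows "L v = 0"
proof -
  obtain \<gamma> e where e: "e > 0" "\<gamma> 0 = y" "\<And>t. \<bar>t\<bar> < e \<Longrightarrow> \<gamma> t \<in> M"
    and g: "(\<gamma> has_vector_derivative v) (at 0)"
    using v unfolding tangent_space_def by blast
  have gd: "(\<gamma> has_derivative (\<lambda>t. t *\<^sub>R v)) (at 0)"
    using g by (simp add: has_vector_derivative_def)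
  have "isCont \<gamma> 0" using g by (simp add: has_vector_derivative_continuous)
  then obtain d where d0: "d > 0" and dU: "\<And>t. dist t 0 < d \<Longrightarrow> \<gamma> t \<in> U"
    using cont_ball_pre U yU e(2) by metis
  have c: "((\<rho> \<circ> \<gamma>) has_derivative (\<lambda>t. L (t *\<^sub>R v))) (at 0)"
    using diff_chain_at[OF gd, of \<rho> L] d e(2) by (simp add: o_def)
  have z: "\<And>t. dist t 0 < min d e \<Longrightarrow> (\<rho> \<circ> \<gamma>) t = 0"
    using dU e(3) MU by fastforce
  have "((\<lambda>_. 0::real) has_derivative (\<lambda>t. L (t *\<^sub>R v))) (at 0)"
    by (rule has_derivative_transform_within[OF c, of "min d e"]) (use d0 e z in auto)
  then have "(\<lambda>t. L (t *\<^sub>R v)) = (\<lambda>_. 0)"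
    using has_derivative_unique has_derivative_const by blast
  then have "L (1 *\<^sub>R v) = 0" by meson
  then show ?thesis by simp
qed



lemma ker_sub_tangent_claim:
  fixes \<rho> :: "'a::euclidean_space \<Rightarrow> real"
  assumes U: "open U" and yU: "y \<in> U" and ry: "\<rho> y = 0" and cont: "continuous_on U \<rho>"
    and d: "(\<rho> has_derivative L) (at y)" and Lv: "L v = 0" and Lu: "L u = 1"
    and eps: "\<epsilon> > 0"
  shows "\<exists>\<delta>>0. \<forall>t. \<bar>t\<bar> < \<delta> \<longrightarrow> (\<exists>s. \<bar>s\<bar> \<le> \<epsilon> * \<bar>t\<bar> \<and>
            y + t *\<^sub>R v + s *\<^sub>R u \<in> U \<and> \<rho> (y + t *\<^sub>R v + s *\<^sub>R u) = 0)"
proof -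
  have bl: "bounded_linear L" using d by (simp add: has_derivative_def)
  define K where "K = norm v + \<epsilon> * norm u + 1"
  have K: "K > 0" "K \<ge> 1" using eps unfolding K_def by (auto intro!: add_nonneg_pos)
  define \<eta> where "\<eta> = \<epsilon> / (2 * K)"
  have eta: "\<eta> > 0" using K eps by (simp add: \<eta>_def)
  obtain d1 where d1: "d1 > 0" "\<And>x'. 0 < norm (x' - y) \<Longrightarrow> norm (x' - y) < d1 \<Longrightarrow>
        norm (\<rho> x' - \<rho> y - L (x' - y)) / norm (x' - y) < \<eta>"
    using d eta unfolding has_derivative_at' by blast
  obtain r where r: "r > 0" "ball y r \<subseteq> U" using U yU openE by blast
  define \<delta> where "\<delta> = min d1 r / K"
  have dpos: "\<delta> > 0" using d1 r K by (simp add: \<delta>_def)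
  have est: "\<bar>\<rho> (y + t *\<^sub>R v + s *\<^sub>R u) - s\<bar> \<le> \<epsilon> * \<bar>t\<bar> / 2 \<and> y + t *\<^sub>R v + s *\<^sub>R u \<in> U"
    if t: "\<bar>t\<bar> < \<delta>" and s: "\<bar>s\<bar> \<le> \<epsilon> * \<bar>t\<bar>" for t s
  proof -
    define h where "h = t *\<^sub>R v + s *\<^sub>R u"
    have Lh: "L h = s" using Lv Lu bl unfolding h_def
      by (simp add: linear_simps bounded_linear.linear)
    have "norm h \<le> \<bar>t\<bar> * norm v + \<bar>s\<bar> * norm u"
      unfolding h_def by (rule order_trans[OF norm_triangle_ineq]) simp
    also have "\<dots> \<le> \<bar>t\<bar> * norm v + \<epsilon> * \<bar>t\<bar> * norm u"
      using s by (simp add: mult_right_mono)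
    also have "\<dots> \<le> \<bar>t\<bar> * K" unfolding K_def by (simp add: algebra_simps)
    finally have nh: "norm h \<le> \<bar>t\<bar> * K" .
    have "\<bar>t\<bar> * K < min d1 r" using t K by (simp add: \<delta>_def pos_less_divide_eq)
    then have nh2: "norm h < d1" "norm h < r" using nh by auto
    have inU: "y + h \<in> U" using nh2 r by (auto simp: dist_norm)
    have "\<bar>\<rho> (y + h) - s\<bar> \<le> \<eta> * norm h"
    proof (cases "h = 0")
      case True then show ?thesis using Lh ry bl by (simp add: linear_simps)
    next
      case False
      then have "norm (\<rho> (y + h) - \<rho> y - L h) / norm h < \<eta>"
        using d1(2)[of "y + h"] nh2 by simp
      then show ?thesis using False ry Lh by (simp add: divide_less_eq)
    qed
    also have "\<dots> \<le> \<eta> * (\<bar>t\<bar> * K)" using nh eta by simp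
    also have "\<dots> = \<epsilon> * \<bar>t\<bar> / 2" using K by (simp add: \<eta>_def)
    finally show ?thesis using inU by (simp add: h_def add.assoc)
  qed
  have "\<forall>t. \<bar>t\<bar> < \<delta> \<longrightarrow> (\<exists>s. \<bar>s\<bar> \<le> \<epsilon> * \<bar>t\<bar> \<and>
            y + t *\<^sub>R v + s *\<^sub>R u \<in> U \<and> \<rho> (y + t *\<^sub>R v + s *\<^sub>R u) = 0)"
  proof (intro allI impI)
    fix t assume t: "\<bar>t\<bar> < \<delta>"
    define a where "a = \<epsilon> * \<bar>t\<bar>"
    have a0: "a \<ge> 0" using eps by (simp add: a_def)
    have e1: "\<rho> (y + t *\<^sub>R v + (-a) *\<^sub>R u) \<le> 0"
    proof -
      have "\<bar>\<rho> (y + t *\<^sub>R v + (-a) *\<^sub>R u) - (-a)\<bar> \<le> a / 2"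
        using est[OF t, of "-a"] a0 by (simp add: a_def)
      then show ?thesis using a0 by linarith
    qed
    have e2: "0 \<le> \<rho> (y + t *\<^sub>R v + a *\<^sub>R u)"
    proof -
      have "\<bar>\<rho> (y + t *\<^sub>R v + a *\<^sub>R u) - a\<bar> \<le> a / 2"
        using est[OF t, of "a"] a0 by (simp add: a_def)
      then show ?thesis using a0 by linarith
    qed
    have cs: "continuous_on {-a..a} (\<lambda>s. \<rho> (y + t *\<^sub>R v + s *\<^sub>R u))"
    proof (rule continuous_on_compose2[OF cont])
      show "continuous_on {-a..a} (\<lambda>s. y + t *\<^sub>R v + s *\<^sub>R u)"
        by (intro continuous_intros)
      show "(\<lambda>s. y + t *\<^sub>R v + s *\<^sub>R u) ` {-a..a} \<subseteq> U"
        using est[OF t] by (auto simp: a_def)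
    qed
    obtain s where s: "-a \<le> s" "s \<le> a" "\<rho> (y + t *\<^sub>R v + s *\<^sub>R u) = 0"
      using IVT'[of "\<lambda>s. \<rho> (y + t *\<^sub>R v + s *\<^sub>R u)", OF e1 e2 _ cs] a0 by auto
    then show "\<exists>s. \<bar>s\<bar> \<le> \<epsilon> * \<bar>t\<bar> \<and>
            y + t *\<^sub>R v + s *\<^sub>R u \<in> U \<and> \<rho> (y + t *\<^sub>R v + s *\<^sub>R u) = 0"
    proof (intro exI conjI)
      show sa: "\<bar>s\<bar> \<le> \<epsilon> * \<bar>t\<bar>" using s by (simp add: a_def abs_le_iff)
      show "y + t *\<^sub>R v + s *\<^sub>R u \<in> U" using est[OF t sa] by blast
    qed (rule s(3))
  qed
  then show ?thesis using dpos by blast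
qed



lemma ker_sub_tangent:
  fixes \<rho> :: "'a::euclidean_space \<Rightarrow> real"
  assumes U: "open U" and yU: "y \<in> U" and yM: "y \<in> M" and MU: "M \<inter> U = {z\<in>U. \<rho> z = 0}"
    and cont: "continuous_on U \<rho>"
    and d: "(\<rho> has_derivative L) (at y)" and L0: "L \<noteq> (\<lambda>_. 0)" and Lv: "L v = 0"
  shows "v \<in> tangent_space M y"
proof -
  have bl: "bounded_linear L" using d by (simp add: has_derivative_def)
  have ry: "\<rho> y = 0" using yU yM MU by auto
  obtain w where w: "L w \<noteq> 0" using L0 by auto
  define u where "u = (1 / L w) *\<^sub>R w"
  have Lu: "L u = 1" using w bl unfolding u_def by (simp add: linear_simps bounded_linear.linear)
  define P where "P t s \<longleftrightarrow> y + t *\<^sub>R v + s *\<^sub>R u \<in> U \<and> \<rho> (y + t *\<^sub>R v + s *\<^sub>R u) = 0" for t s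
  define E where "E t = {\<epsilon>. \<epsilon> > 0 \<and> (\<exists>s. \<bar>s\<bar> \<le> \<epsilon> * \<bar>t\<bar> \<and> P t s)}" for t
  define \<sigma> where "\<sigma> t = (if t = 0 then 0 else SOME s. P t s \<and> \<bar>s\<bar> \<le> (Inf (E t) + \<bar>t\<bar>) * \<bar>t\<bar>)" for t
  have cl: "\<exists>\<delta>>0. \<forall>t. \<bar>t\<bar> < \<delta> \<longrightarrow> (\<exists>s. \<bar>s\<bar> \<le> \<epsilon> * \<bar>t\<bar> \<and> P t s)" if "\<epsilon> > 0" for \<epsilon>
    using ker_sub_tangent_claim[OF U yU ry cont d Lv Lu that] unfolding P_def by blast
  obtain \<delta>1 where d1: "\<delta>1 > 0" "\<And>t. \<bar>t\<bar> < \<delta>1 \<Longrightarrow> \<exists>s. \<bar>s\<bar> \<le> 1 * \<bar>t\<bar> \<and> P t s"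
    using cl[of 1] by auto
  have bdd: "bdd_below (E t)" for t unfolding E_def by (rule bdd_belowI[of _ 0]) auto
  have F1: "P t (\<sigma> t) \<and> \<bar>\<sigma> t\<bar> \<le> (Inf (E t) + \<bar>t\<bar>) * \<bar>t\<bar>" if t: "\<bar>t\<bar> < \<delta>1" for t
  proof (cases "t = 0")
    case True then show ?thesis using yU ry by (simp add: \<sigma>_def P_def)
  next
    case False
    have "1 \<in> E t" using d1(2)[OF t] unfolding E_def by auto
    then have "E t \<noteq> {}" by auto
    moreover have "Inf (E t) < Inf (E t) + \<bar>t\<bar>" using False by simp
    ultimately obtain \<epsilon> where e: "\<epsilon> \<in> E t" "\<epsilon> < Inf (E t) + \<bar>t\<bar>" using cInf_lessD by blast
    then obtain s where s: "\<bar>s\<bar> \<le> \<epsilon> * \<bar>t\<bar>" "P t s" unfolding E_def by auto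
    have "\<bar>s\<bar> \<le> (Inf (E t) + \<bar>t\<bar>) * \<bar>t\<bar>"
      using s(1) e(2) by (smt (verit) abs_ge_zero mult_right_mono)
    then have "\<exists>s. P t s \<and> \<bar>s\<bar> \<le> (Inf (E t) + \<bar>t\<bar>) * \<bar>t\<bar>" using s by blast
    then show ?thesis using False unfolding \<sigma>_def by (simp only: if_False) (rule someI_ex)
  qed
  have F2: "\<exists>\<delta>>0. \<forall>t. t \<noteq> 0 \<and> \<bar>t\<bar> < \<delta> \<longrightarrow> Inf (E t) \<le> \<epsilon>" if eps: "\<epsilon> > 0" for \<epsilon>
  proof -
    obtain \<delta> where "\<delta> > 0" "\<And>t. \<bar>t\<bar> < \<delta> \<Longrightarrow> \<exists>s. \<bar>s\<bar> \<le> \<epsilon> * \<bar>t\<bar> \<and> P t s"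
      using cl[OF eps] by auto
    then have "\<forall>t. t \<noteq> 0 \<and> \<bar>t\<bar> < \<delta> \<longrightarrow> Inf (E t) \<le> \<epsilon>"
      using eps bdd by (auto intro!: cInf_lower simp: E_def)
    then show ?thesis using \<open>\<delta> > 0\<close> by blast
  qed
  have H: "\<exists>d>0. \<forall>t. t \<noteq> 0 \<and> \<bar>t\<bar> < d \<longrightarrow> \<bar>\<sigma> t\<bar> / \<bar>t\<bar> < e" if e: "e > 0" for e
  proof -
    obtain \<delta> where dl: "\<delta> > 0" "\<And>t. t \<noteq> 0 \<Longrightarrow> \<bar>t\<bar> < \<delta> \<Longrightarrow> Inf (E t) \<le> e / 3"
      using F2[of "e/3"] e by auto
    define d where "d = min \<delta> (min \<delta>1 (e/3))"
    have "d > 0" using dl d1 e by (simp add: d_def)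
    moreover have "\<bar>\<sigma> t\<bar> / \<bar>t\<bar> < e" if t: "t \<noteq> 0" "\<bar>t\<bar> < d" for t
    proof -
      have "\<bar>\<sigma> t\<bar> \<le> (Inf (E t) + \<bar>t\<bar>) * \<bar>t\<bar>" using F1[of t] t by (simp add: d_def)
      then have "\<bar>\<sigma> t\<bar> / \<bar>t\<bar> \<le> Inf (E t) + \<bar>t\<bar>" using t(1) by (simp add: divide_le_eq)
      also have "\<dots> < e" using dl(2)[OF t(1)] t e by (simp add: d_def)
      finally show ?thesis .
    qed
    ultimately show ?thesis by blast
  qed
  have s0: "\<sigma> 0 = 0" by (simp add: \<sigma>_def)
  have sd: "(\<sigma> has_derivative (\<lambda>h. h * 0)) (at 0)"
    unfolding has_derivative_at' using H by (simp add: s0)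
  define \<gamma> where "\<gamma> t = y + t *\<^sub>R v + \<sigma> t *\<^sub>R u" for t
  have gd: "(\<gamma> has_derivative (\<lambda>h. h *\<^sub>R v)) (at 0)"
    unfolding \<gamma>_def by (auto intro!: derivative_eq_intros sd)
  show ?thesis unfolding tangent_space_def
  proof (intro CollectI exI conjI allI impI)
    show "\<delta>1 > 0" by (rule d1(1))
    show "\<gamma> 0 = y" by (simp add: \<gamma>_def s0)
    show "\<gamma> t \<in> M" if "\<bar>t\<bar> < \<delta>1" for t
      using F1[OF that] MU unfolding P_def \<gamma>_def by blast
    show "(\<gamma> has_vector_derivative v) (at 0)"
      using gd by (simp add: has_vector_derivative_def)
  qed
qed



lemma tangent_eq:
  fixes \<rho> :: "'a::euclidean_space \<Rightarrow> real"
  assumes U: "open U" and yU: "y \<in> U" and yM: "y \<in> M" and MU: "M \<inter> U = {z\<in>U. \<rho> z = 0}"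
    and cont: "continuous_on U \<rho>"
    and d: "(\<rho> has_derivative L) (at y)" and L0: "L \<noteq> (\<lambda>_. 0)"
  shows "tangent_space M y = {v. L v = 0}"
  using tangent_sub_ker[OF U yU MU d] ker_sub_tangent[OF U yU yM MU cont d L0] by blast

definition acoef :: "(complex ^ 'n \<Rightarrow> real) \<Rightarrow> 'n \<Rightarrow> complex" where
  "acoef L j = complex_of_real (L (axis j 1)) - \<i> * complex_of_real (L (axis j \<i>))"

definition cform :: "(complex ^ 'n \<Rightarrow> real) \<Rightarrow> complex ^ 'n \<Rightarrow> complex" where
  "cform L v = (\<Sum>j\<in>UNIV. acoef L j * v $ j)"

lemma axis_split: "axis j z = Re z *\<^sub>R axis j (1::complex) + Im z *\<^sub>R axis j \<i>"
  by (simp add: vec_eq_iff axis_def complex_eq_iff)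

lemma vec_axis_sum: "(v::complex^'n) = (\<Sum>j\<in>UNIV. axis j (v $ j))"
  by (simp add: vec_eq_iff axis_def sum_component if_distrib cong: if_cong)

lemma lin_repr:
  fixes L :: "complex ^ 'n \<Rightarrow> real"
  assumes "linear L"
  shows "L v = Re (cform L v)"
proof -
  have "L v = L (\<Sum>j\<in>UNIV. axis j (v $ j))" by (subst vec_axis_sum) simp
  also have "\<dots> = (\<Sum>j\<in>UNIV. L (axis j (v $ j)))" using assms by (simp add: linear_sum)
  also have "\<dots> = (\<Sum>j\<in>UNIV. Re (acoef L j * v $ j))"
  proof (rule sum.cong[OF refl])
    fix j
    have "L (axis j (v $ j)) = Re (v $ j) * L (axis j 1) + Im (v $ j) * L (axis j \<i>)"
      by (subst axis_split) (simp add: assms linear_add linear_scale)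
    then show "L (axis j (v $ j)) = Re (acoef L j * v $ j)"
      by (simp add: acoef_def)
  qed
  also have "\<dots> = Re (cform L v)" by (simp add: cform_def)
  finally show ?thesis .
qed

lemma cform_J: "cform L (Jmul v) = \<i> * cform L v"
  by (simp add: cform_def Jmul_def sum_distrib_left algebra_simps)

lemma cform_diff: "cform L (v - w) = cform L v - cform L w"
  by (simp add: cform_def sum_subtractf algebra_simps)

lemma cform_add: "cform L (v + w) = cform L v + cform L w"
  by (simp add: cform_def sum.distrib algebra_simps)

lemma cform_scaleR: "cform L (c *\<^sub>R v) = c * cform L v"
  unfolding cform_def vector_scaleR_component
  by (simp add: sum_distrib_left scaleR_conv_of_real mult.left_commute)

lemma cform_uminus: "cform L (- v) = - cform L v"
  by (simp add: cform_def sum_negf)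

lemma JJ: "Jmul (Jmul v) = - v"
  by (simp add: Jmul_def vec_eq_iff)

lemma complex_tangent_eq:
  fixes L :: "complex ^ 'n \<Rightarrow> real"
  assumes T: "tangent_space M y = {v. L v = 0}" and lin: "linear L"
  shows "complex_tangent M y = {v. cform L v = 0}"
proof -
  have "v \<in> Jmul ` {v. L v = 0} \<longleftrightarrow> L (- Jmul v) = 0" for v
  proof
    assume "v \<in> Jmul ` {v. L v = 0}"
    then obtain w where "L w = 0" "v = Jmul w" by auto
    then show "L (- Jmul v) = 0" by (simp add: JJ)
  next
    assume "L (- Jmul v) = 0"
    moreover have "v = Jmul (- Jmul v)" by (simp add: Jmul_def vec_eq_iff)
    ultimately show "v \<in> Jmul ` {v. L v = 0}" by blast
  qed
  moreover have "L (- Jmul v) = Im (cform L v)" for v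
    using lin_repr[OF lin, of "- Jmul v"] by (simp add: cform_J cform_uminus)
  ultimately show ?thesis
    unfolding complex_tangent_def T using lin_repr[OF lin] by (auto simp: complex_eq_iff)
qed



definition chartc :: "(complex ^ 'n \<Rightarrow> real) \<Rightarrow> 'n \<Rightarrow> complex ^ 'n \<Rightarrow> complex ^ 'n" where
  "chartc L k y = (\<chi> j. if j = k then - cform L y / acoef L k else acoef L j / acoef L k)"

lemma dual_hyper:
  assumes ak: "acoef L k \<noteq> 0"
  shows "is_chart_coord k ((\<lambda>v. y + v) ` {v. cform L v = 0}) (chartc L k y)"
proof -
  have "cform L (z - y) = 0 \<longleftrightarrow>
      z $ k + (\<Sum>j\<in>UNIV - {k}. chartc L k y $ j * z $ j) + chartc L k y $ k = 0" for z
  proof -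
    have "cform L (z - y) = acoef L k * (z $ k + (\<Sum>j\<in>UNIV - {k}. chartc L k y $ j * z $ j) + chartc L k y $ k)"
    proof -
      have s: "cform L z = acoef L k * z $ k + (\<Sum>j\<in>UNIV - {k}. acoef L j * z $ j)"
        unfolding cform_def by (subst sum.remove[of _ k]) auto
      have "(\<Sum>j\<in>UNIV - {k}. chartc L k y $ j * z $ j) = (\<Sum>j\<in>UNIV - {k}. acoef L j * z $ j) / acoef L k"
        by (simp add: chartc_def sum_divide_distrib)
      then show ?thesis using ak s
        by (simp add: cform_diff chartc_def distrib_left right_diff_distrib)
    qed
    then show ?thesis using ak by simp
  qed
  moreover have "(\<lambda>v. y + v) ` {v. cform L v = 0} = {z. cform L (z - y) = 0}"
  proof (auto simp: image_iff cform_add)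
    fix x assume "cform L (x - y) = 0"
    then show "\<exists>xa. cform L xa = 0 \<and> x = y + xa" by (intro exI[of _ "x - y"]) simp
  qed
  ultimately show ?thesis unfolding is_chart_coord_def by auto
qed

lemma chart_unique:
  assumes c: "is_chart_coord k H c" and c': "is_chart_coord k H c'"
  shows "c = c'"
proof -
  have H: "{z. z $ k + (\<Sum>j\<in>UNIV - {k}. c $ j * z $ j) + c $ k = 0} =
           {z. z $ k + (\<Sum>j\<in>UNIV - {k}. c' $ j * z $ j) + c' $ k = 0}"
    using c c' unfolding is_chart_coord_def by simp
  define z0 :: "complex^'a" where "z0 = axis k (- c $ k)"
  have s0: "(\<Sum>j\<in>UNIV - {k}. d $ j * z0 $ j) = 0" for d :: "complex^'a"
    by (rule sum.neutral) (auto simp: z0_def axis_def)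
  have "z0 \<in> {z. z $ k + (\<Sum>j\<in>UNIV - {k}. c $ j * z $ j) + c $ k = 0}"
    using s0 by (simp add: z0_def)
  then have "z0 $ k + c' $ k = 0" using H s0 by auto
  then have kk: "c' $ k = c $ k" by (simp add: z0_def)
  have "c $ j = c' $ j" if jk: "j \<noteq> k" for j
  proof -
    define z1 :: "complex^'a" where "z1 = axis k (- c $ k - c $ j) + axis j 1"
    have s1: "(\<Sum>i\<in>UNIV - {k}. d $ i * z1 $ i) = d $ j" for d :: "complex^'a"
    proof -
      have "(\<Sum>i\<in>UNIV - {k}. d $ i * z1 $ i) = (\<Sum>i\<in>UNIV - {k}. if i = j then d $ j else 0)"
        by (rule sum.cong) (auto simp: z1_def axis_def)
      also have "\<dots> = d $ j" using jk by simp
      finally show ?thesis .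
    qed
    have zk: "z1 $ k = - c $ k - c $ j" using jk by (simp add: z1_def axis_def)
    have "z1 \<in> {z. z $ k + (\<Sum>j\<in>UNIV - {k}. c $ j * z $ j) + c $ k = 0}"
      using s1 zk by simp
    then have "z1 $ k + c' $ j + c' $ k = 0" using H s1 by auto
    then show ?thesis using zk kk by (simp add: algebra_simps)
  qed
  then show ?thesis using kk by (metis vec_eq_iff)
qed

lemma dual_chart_eq: "is_chart_coord k H c \<Longrightarrow> dual_chart k H = c"
  unfolding dual_chart_def using chart_unique by blast



lemma norm_axis_vec: "norm (axis j (z::'a::real_normed_vector) :: 'a^'n) = norm z"
proof -
  have "(\<Sum>i\<in>UNIV. (norm ((axis j z :: 'a^'n) $ i))\<^sup>2) = (\<Sum>i\<in>UNIV. if i = j then (norm z)\<^sup>2 else 0)"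
    by (rule sum.cong) (auto simp: axis_def)
  then show ?thesis by (simp add: norm_vec_def L2_set_def)
qed

lemma bounded_linear_axis_vec: "bounded_linear (\<lambda>z::'a::real_normed_vector. axis j z :: 'a^'n)"
  by (rule bounded_linear_intro[where K=1]) (auto simp: norm_axis_vec, auto simp: axis_def vec_eq_iff)

lemma has_derivative_vec_lambda:
  fixes f :: "'n::finite \<Rightarrow> 'a::real_normed_vector \<Rightarrow> 'b::real_normed_vector"
  assumes "\<And>j. (f j has_derivative f' j) F"
  shows "((\<lambda>x. \<chi> j. f j x) has_derivative (\<lambda>h. \<chi> j. f' j h)) F"
proof -
  have e1: "(\<lambda>x. \<chi> j. f j x) = (\<lambda>x. \<Sum>j\<in>UNIV. axis j (f j x))"
    by (simp add: fun_eq_iff vec_eq_iff axis_def sum_component if_distrib cong: if_cong)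
  have e2: "(\<lambda>h. \<chi> j. f' j h) = (\<lambda>h. \<Sum>j\<in>UNIV. axis j (f' j h))"
    by (simp add: fun_eq_iff vec_eq_iff axis_def sum_component if_distrib cong: if_cong)
  show ?thesis unfolding e1 e2
    by (intro has_derivative_sum bounded_linear.has_derivative[OF bounded_linear_axis_vec] assms)
qed

lemma has_derivative_bl_apply:
  assumes "(\<rho>' has_derivative blinfun_apply D) F"
  shows "((\<lambda>z. blinfun_apply (\<rho>' z) w) has_derivative (\<lambda>h. blinfun_apply (blinfun_apply D h) w)) F"
  using bounded_linear.has_derivative[OF bounded_bilinear.bounded_linear_left[OF bounded_bilinear_blinfun_apply] assms]
  by simp



definition DGv :: "('n \<Rightarrow> complex) \<Rightarrow> ('n \<Rightarrow> complex) \<Rightarrow> 'n \<Rightarrow> complex^'n \<Rightarrow> complex^'n \<Rightarrow> complex^'n::finite" where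
  "DGv a a' k y h = (\<chi> j. if j = k then
      ((- (\<Sum>i\<in>UNIV. a' i * y $ i + a i * h $ i)) * a k - (- (\<Sum>i\<in>UNIV. a i * y $ i)) * a' k) / (a k * a k)
      else (a' j * a k - a j * a' k) / (a k * a k))"

lemma has_derivative_acoef:
  assumes "(\<rho>' has_derivative blinfun_apply D) F"
  shows "((\<lambda>z. acoef (blinfun_apply (\<rho>' z)) j) has_derivative (\<lambda>h. acoef (blinfun_apply (blinfun_apply D h)) j)) F"
  unfolding acoef_def
  by (auto intro!: derivative_eq_intros has_derivative_bl_apply[OF assms])

lemma has_derivative_cform_self:
  assumes d: "(\<rho>' has_derivative blinfun_apply D) (at y)"
  shows "((\<lambda>z. cform (blinfun_apply (\<rho>' z)) z) has_derivative
      (\<lambda>h. \<Sum>i\<in>UNIV. acoef (blinfun_apply (blinfun_apply D h)) i * y $ i + acoef (blinfun_apply (\<rho>' y)) i * h $ i)) (at y)"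
  unfolding cform_def
  apply (rule has_derivative_sum)
  apply (rule has_derivative_eq_rhs)
   apply (rule has_derivative_mult[OF has_derivative_acoef[OF d] bounded_linear.has_derivative[OF bounded_linear_vec_nth has_derivative_ident]])
  apply (simp add: fun_eq_iff algebra_simps)
  done

lemma dG:
  assumes d2: "(\<rho>' has_derivative blinfun_apply D) (at y)" and ak: "acoef (blinfun_apply (\<rho>' y)) k \<noteq> 0"
  shows "((\<lambda>z. chartc (blinfun_apply (\<rho>' z)) k z) has_derivative
     (\<lambda>h. DGv (acoef (blinfun_apply (\<rho>' y))) (\<lambda>j. acoef (blinfun_apply (blinfun_apply D h)) j) k y h)) (at y)"
proof -
  have e: "(\<lambda>z. chartc (blinfun_apply (\<rho>' z)) k z) = (\<lambda>z. \<chi> j. if j = k then - cform (blinfun_apply (\<rho>' z)) z / acoef (blinfun_apply (\<rho>' z)) k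
        else acoef (blinfun_apply (\<rho>' z)) j / acoef (blinfun_apply (\<rho>' z)) k)"
    by (simp add: chartc_def)
  have c1: "((\<lambda>z. - cform (blinfun_apply (\<rho>' z)) z / acoef (blinfun_apply (\<rho>' z)) k) has_derivative
     (\<lambda>h. ((- (\<Sum>i\<in>UNIV. acoef (blinfun_apply (blinfun_apply D h)) i * y $ i + acoef (blinfun_apply (\<rho>' y)) i * h $ i)) * acoef (blinfun_apply (\<rho>' y)) k
       - (- cform (blinfun_apply (\<rho>' y)) y) * acoef (blinfun_apply (blinfun_apply D h)) k)
       / (acoef (blinfun_apply (\<rho>' y)) k * acoef (blinfun_apply (\<rho>' y)) k))) (at y)"
    by (rule has_derivative_divide'[OF has_derivative_minus[OF has_derivative_cform_self[OF d2]] has_derivative_acoef[OF d2] ak])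
  have c2: "((\<lambda>z. acoef (blinfun_apply (\<rho>' z)) j / acoef (blinfun_apply (\<rho>' z)) k) has_derivative
     (\<lambda>h. (acoef (blinfun_apply (blinfun_apply D h)) j * acoef (blinfun_apply (\<rho>' y)) k
       - acoef (blinfun_apply (\<rho>' y)) j * acoef (blinfun_apply (blinfun_apply D h)) k)
       / (acoef (blinfun_apply (\<rho>' y)) k * acoef (blinfun_apply (\<rho>' y)) k))) (at y)" for j
    by (rule has_derivative_divide'[OF has_derivative_acoef[OF d2] has_derivative_acoef[OF d2] ak])
  show ?thesis unfolding e DGv_def
  proof (rule has_derivative_vec_lambda)
    fix j
    show "((\<lambda>x. if j = k then - cform (blinfun_apply (\<rho>' x)) x / acoef (blinfun_apply (\<rho>' x)) k
        else acoef (blinfun_apply (\<rho>' x)) j / acoef (blinfun_apply (\<rho>' x)) k) has_derivative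
       (\<lambda>h. if j = k then ((- (\<Sum>i\<in>UNIV. acoef (blinfun_apply (blinfun_apply D h)) i * y $ i + acoef (blinfun_apply (\<rho>' y)) i * h $ i)) * acoef (blinfun_apply (\<rho>' y)) k
       - (- (\<Sum>i\<in>UNIV. acoef (blinfun_apply (\<rho>' y)) i * y $ i)) * acoef (blinfun_apply (blinfun_apply D h)) k)
       / (acoef (blinfun_apply (\<rho>' y)) k * acoef (blinfun_apply (\<rho>' y)) k)
       else (acoef (blinfun_apply (blinfun_apply D h)) j * acoef (blinfun_apply (\<rho>' y)) k
       - acoef (blinfun_apply (\<rho>' y)) j * acoef (blinfun_apply (blinfun_apply D h)) k)
       / (acoef (blinfun_apply (\<rho>' y)) k * acoef (blinfun_apply (\<rho>' y)) k))) (at y)"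
    proof (cases "j = k")
      case True
      then show ?thesis using c1 unfolding cform_def by simp
    next
      case False
      then show ?thesis using c2[of j] by simp
    qed
  qed
qed



lemma DGv_zero:
  fixes a a' :: "'n::finite \<Rightarrow> complex"
  assumes ak: "a k \<noteq> 0" and z: "DGv a a' k y h = 0"
  shows "\<forall>j. a' j = (a' k / a k) * a j" and "(\<Sum>i\<in>UNIV. a i * h $ i) = 0"
proof -
  have comp: "DGv a a' k y h $ j = 0" for j using z by (simp only: zero_index)
  show lam: "\<forall>j. a' j = (a' k / a k) * a j"
  proof
    fix j show "a' j = (a' k / a k) * a j"
    proof (cases "j = k")
      case True then show ?thesis using ak by simp
    next
      case False
      have "(a' j * a k - a j * a' k) / (a k * a k) = 0"
        using comp[of j] False unfolding DGv_def by (simp only: vec_lambda_beta if_False)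
      then have "a' j * a k - a j * a' k = 0" using ak by (simp only: divide_eq_0_iff mult_eq_0_iff) blast
      then show ?thesis using ak by (simp add: field_simps)
    qed
  qed
  have "((- (\<Sum>i\<in>UNIV. a' i * y $ i + a i * h $ i)) * a k - (- (\<Sum>i\<in>UNIV. a i * y $ i)) * a' k) / (a k * a k) = 0"
    using comp[of k] unfolding DGv_def by (simp only: vec_lambda_beta if_True refl)
  then have e0: "(- (\<Sum>i\<in>UNIV. a' i * y $ i + a i * h $ i)) * a k - (- (\<Sum>i\<in>UNIV. a i * y $ i)) * a' k = 0"
    using ak by (simp only: divide_eq_0_iff mult_eq_0_iff) blast
  define c where "c = a' k / a k"
  have lam': "a' j = c * a j" for j unfolding c_def by (rule lam[rule_format])
  have ak': "a' k = c * a k" using ak by (simp add: c_def)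
  define S where "S = (\<Sum>i\<in>UNIV. a i * y $ i)"
  define H where "H = (\<Sum>i\<in>UNIV. a i * h $ i)"
  have s1: "(\<Sum>i\<in>UNIV. a' i * y $ i + a i * h $ i) = c * S + H"
    unfolding S_def H_def by (simp add: lam' sum.distrib sum_distrib_left mult.assoc)
  have "(- (c * S + H)) * a k - (- S) * (c * a k) = 0" using e0 unfolding s1 ak' S_def .
  then have "H * a k = 0" by (simp add: algebra_simps)
  then show "(\<Sum>i\<in>UNIV. a i * h $ i) = 0" using ak by (simp add: H_def)
qed

lemma normal_ident:
  fixes L :: "'a::real_inner \<Rightarrow> real"
  assumes "linear L" "\<And>w. L w = 0 \<Longrightarrow> n \<bullet> w = 0"
  shows "(n \<bullet> v) * L u = (n \<bullet> u) * L v"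
proof -
  have "L (L u *\<^sub>R v - L v *\<^sub>R u) = 0" using assms(1) by (simp add: linear_diff linear_scale)
  then have "n \<bullet> (L u *\<^sub>R v - L v *\<^sub>R u) = 0" using assms(2) by blast
  then show ?thesis by (simp add: inner_diff_right algebra_simps)
qed



lemma shape_zero:
  fixes n :: "'a::euclidean_space \<Rightarrow> 'a" and \<rho>' :: "'a \<Rightarrow> ('a \<Rightarrow>\<^sub>L real)"
  assumes W: "open W" "y \<in> W" and yM: "y \<in> M"
   and perp: "\<And>z w. z \<in> M \<inter> W \<Longrightarrow> blinfun_apply (\<rho>' z) w = 0 \<Longrightarrow> n z \<bullet> w = 0"
   and dn: "(n has_derivative Dn) (at y within M \<inter> V)" and WV: "W \<subseteq> V"
   and d2: "(\<rho>' has_derivative blinfun_apply D) (at y)"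
   and v: "v \<in> tangent_space M y" and Lv: "blinfun_apply (\<rho>' y) v = 0"
   and u: "blinfun_apply (\<rho>' y) u \<noteq> 0"
   and H0: "blinfun_apply (blinfun_apply D v) v = 0"
  shows "Dn v \<bullet> v = 0"
proof -
  obtain \<gamma> e where e: "e > 0" "\<gamma> 0 = y" "\<And>t. \<bar>t\<bar> < e \<Longrightarrow> \<gamma> t \<in> M"
    and g: "(\<gamma> has_vector_derivative v) (at 0)"
    using v unfolding tangent_space_def by blast
  have gd: "(\<gamma> has_derivative (\<lambda>t. t *\<^sub>R v)) (at 0)"
    using g by (simp add: has_vector_derivative_def)
  have "isCont \<gamma> 0" using g by (simp add: has_vector_derivative_continuous)
  then obtain d where d0: "d > 0" and dW: "\<And>t. dist t 0 < d \<Longrightarrow> \<gamma> t \<in> W"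
    using cont_ball_pre W e(2) by metis
  define B where "B = ball (0::real) (min d e)"
  have B: "open B" "0 \<in> B" using d0 e by (auto simp: B_def)
  have gB: "\<gamma> ` B \<subseteq> M \<inter> V" "\<gamma> ` B \<subseteq> M \<inter> W"
    using dW e(3) WV by (auto simp: B_def dist_norm)
  have dnB: "(n has_derivative Dn) (at (\<gamma> 0) within \<gamma> ` B)"
    using has_derivative_subset[OF dn gB(1)] e(2) by simp
  have ng: "((\<lambda>t. n (\<gamma> t)) has_derivative (\<lambda>t. Dn (t *\<^sub>R v))) (at 0)"
    using diff_chain_within[OF has_derivative_at_withinI[OF gd, of B] dnB] at_within_open[OF B(2,1)]
    by (simp add: o_def)
  have d2g: "(\<rho>' has_derivative blinfun_apply D) (at (\<gamma> 0))" using d2 e(2) by simp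
  have rg: "((\<lambda>t. blinfun_apply (\<rho>' (\<gamma> t)) w) has_derivative (\<lambda>t. blinfun_apply (blinfun_apply D (t *\<^sub>R v)) w)) (at 0)" for w
    using diff_chain_at[OF gd has_derivative_bl_apply[OF d2g, of w]] by (simp add: o_def)
  have nb: "bounded_linear (\<lambda>x::'a. x \<bullet> w)" for w by (rule bounded_linear_inner_left)
  have ngw: "((\<lambda>t. n (\<gamma> t) \<bullet> w) has_derivative (\<lambda>t. Dn (t *\<^sub>R v) \<bullet> w)) (at 0)" for w
    using bounded_linear.has_derivative[OF nb ng] .
  have h1: "((\<lambda>t. (n (\<gamma> t) \<bullet> v) * blinfun_apply (\<rho>' (\<gamma> t)) u) has_derivative
     (\<lambda>t. (n (\<gamma> 0) \<bullet> v) * blinfun_apply (blinfun_apply D (t *\<^sub>R v)) u + (Dn (t *\<^sub>R v) \<bullet> v) * blinfun_apply (\<rho>' (\<gamma> 0)) u)) (at 0)"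
    by (rule has_derivative_mult[OF ngw rg])
  have h2: "((\<lambda>t. (n (\<gamma> t) \<bullet> u) * blinfun_apply (\<rho>' (\<gamma> t)) v) has_derivative
     (\<lambda>t. (n (\<gamma> 0) \<bullet> u) * blinfun_apply (blinfun_apply D (t *\<^sub>R v)) v + (Dn (t *\<^sub>R v) \<bullet> u) * blinfun_apply (\<rho>' (\<gamma> 0)) v)) (at 0)"
    by (rule has_derivative_mult[OF ngw rg])
  have eq: "(n (\<gamma> t) \<bullet> v) * blinfun_apply (\<rho>' (\<gamma> t)) u = (n (\<gamma> t) \<bullet> u) * blinfun_apply (\<rho>' (\<gamma> t)) v"
    if "t \<in> B" for t
  proof (rule normal_ident)
    show "linear (blinfun_apply (\<rho>' (\<gamma> t)))" by (simp add: blinfun.bounded_linear_right bounded_linear.linear)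
    show "\<And>w. blinfun_apply (\<rho>' (\<gamma> t)) w = 0 \<Longrightarrow> n (\<gamma> t) \<bullet> w = 0"
      using perp gB(2) that by blast
  qed
  have h1': "((\<lambda>t. (n (\<gamma> t) \<bullet> u) * blinfun_apply (\<rho>' (\<gamma> t)) v) has_derivative
     (\<lambda>t. (n (\<gamma> 0) \<bullet> v) * blinfun_apply (blinfun_apply D (t *\<^sub>R v)) u + (Dn (t *\<^sub>R v) \<bullet> v) * blinfun_apply (\<rho>' (\<gamma> 0)) u)) (at 0)"
    by (rule has_derivative_transform_within_open[OF h1 B(1) B(2)]) (use eq in auto)
  have "(\<lambda>t. (n (\<gamma> 0) \<bullet> v) * blinfun_apply (blinfun_apply D (t *\<^sub>R v)) u + (Dn (t *\<^sub>R v) \<bullet> v) * blinfun_apply (\<rho>' (\<gamma> 0)) u)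
      = (\<lambda>t. (n (\<gamma> 0) \<bullet> u) * blinfun_apply (blinfun_apply D (t *\<^sub>R v)) v + (Dn (t *\<^sub>R v) \<bullet> u) * blinfun_apply (\<rho>' (\<gamma> 0)) v)"
    by (rule has_derivative_unique[OF h1' h2])
  then have "(n (\<gamma> 0) \<bullet> v) * blinfun_apply (blinfun_apply D (1 *\<^sub>R v)) u + (Dn (1 *\<^sub>R v) \<bullet> v) * blinfun_apply (\<rho>' (\<gamma> 0)) u
      = (n (\<gamma> 0) \<bullet> u) * blinfun_apply (blinfun_apply D (1 *\<^sub>R v)) v + (Dn (1 *\<^sub>R v) \<bullet> u) * blinfun_apply (\<rho>' (\<gamma> 0)) v"
    by meson
  moreover have "n y \<bullet> v = 0" using perp[of y v] yM W Lv by blast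
  ultimately have "(Dn v \<bullet> v) * blinfun_apply (\<rho>' y) u = 0" using e(2) H0 Lv by simp
  then show ?thesis using u by simp
qed



lemma onorm_le_basis:
  fixes f :: "'a::euclidean_space \<Rightarrow> 'b::real_normed_vector"
  assumes "linear f"
  shows "onorm f \<le> (\<Sum>b\<in>Basis. norm (f b))"
proof (rule onorm_le)
  fix v :: 'a
  have "f v = f (\<Sum>b\<in>Basis. (v \<bullet> b) *\<^sub>R b)" by (simp add: euclidean_representation)
  also have "\<dots> = (\<Sum>b\<in>Basis. (v \<bullet> b) *\<^sub>R f b)" using assms by (simp add: linear_sum linear_scale)
  finally have "norm (f v) \<le> (\<Sum>b\<in>Basis. norm ((v \<bullet> b) *\<^sub>R f b))" by (metis norm_sum)
  also have "\<dots> \<le> (\<Sum>b\<in>Basis. norm v * norm (f b))"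
    by (rule sum_mono) (simp add: Basis_le_norm mult_right_mono)
  finally show "norm (f v) \<le> (\<Sum>b\<in>Basis. norm (f b)) * norm v"
    by (simp add: sum_distrib_left mult.commute)
qed

lemma isCont_bl_apply:
  assumes "isCont f x"
  shows "isCont (\<lambda>z. blinfun_apply (f z) w) x"
  using bounded_bilinear.continuous[OF bounded_bilinear_blinfun_apply assms continuous_const] .

lemma isCont_acoef:
  assumes "isCont f x"
  shows "isCont (\<lambda>z. acoef (blinfun_apply (f z)) j) x"
  unfolding acoef_def by (intro continuous_intros isCont_bl_apply assms)

lemma DGv_cont:
  assumes c1: "isCont \<rho>' x" and c2: "isCont \<rho>'' x" and ak: "acoef (blinfun_apply (\<rho>' x)) k \<noteq> 0"
  shows "isCont (\<lambda>z. DGv (acoef (blinfun_apply (\<rho>' z))) (\<lambda>j. acoef (blinfun_apply (blinfun_apply (\<rho>'' z) b)) j) k z b) x"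
proof -
  have c3: "isCont (\<lambda>z. blinfun_apply (\<rho>'' z) b) x" by (rule isCont_bl_apply[OF c2])
  show ?thesis
    unfolding DGv_def continuous_at
  proof (rule tendsto_vec_lambda)
    fix j
    note t1 = isCont_acoef[OF c1, unfolded continuous_at] and t2 = isCont_acoef[OF c3, unfolded continuous_at]
    note t3 = tendsto_vec_nth[OF tendsto_ident_at]
    show "((\<lambda>z. if j = k then ((- (\<Sum>i\<in>UNIV. acoef (blinfun_apply (blinfun_apply (\<rho>'' z) b)) i * z $ i + acoef (blinfun_apply (\<rho>' z)) i * b $ i)) * acoef (blinfun_apply (\<rho>' z)) k
       - (- (\<Sum>i\<in>UNIV. acoef (blinfun_apply (\<rho>' z)) i * z $ i)) * acoef (blinfun_apply (blinfun_apply (\<rho>'' z) b)) k)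
       / (acoef (blinfun_apply (\<rho>' z)) k * acoef (blinfun_apply (\<rho>' z)) k)
       else (acoef (blinfun_apply (blinfun_apply (\<rho>'' z) b)) j * acoef (blinfun_apply (\<rho>' z)) k
       - acoef (blinfun_apply (\<rho>' z)) j * acoef (blinfun_apply (blinfun_apply (\<rho>'' z) b)) k)
       / (acoef (blinfun_apply (\<rho>' z)) k * acoef (blinfun_apply (\<rho>' z)) k)) \<longlongrightarrow>
       (if j = k then ((- (\<Sum>i\<in>UNIV. acoef (blinfun_apply (blinfun_apply (\<rho>'' x) b)) i * x $ i + acoef (blinfun_apply (\<rho>' x)) i * b $ i)) * acoef (blinfun_apply (\<rho>' x)) k
       - (- (\<Sum>i\<in>UNIV. acoef (blinfun_apply (\<rho>' x)) i * x $ i)) * acoef (blinfun_apply (blinfun_apply (\<rho>'' x) b)) k)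
       / (acoef (blinfun_apply (\<rho>' x)) k * acoef (blinfun_apply (\<rho>' x)) k)
       else (acoef (blinfun_apply (blinfun_apply (\<rho>'' x) b)) j * acoef (blinfun_apply (\<rho>' x)) k
       - acoef (blinfun_apply (\<rho>' x)) j * acoef (blinfun_apply (blinfun_apply (\<rho>'' x) b)) k)
       / (acoef (blinfun_apply (\<rho>' x)) k * acoef (blinfun_apply (\<rho>' x)) k))) (at x)"
    proof (cases "j = k")
      case True
      then show ?thesis
        by (simp only: True simp_thms if_True) (intro tendsto_intros t1 t2 t3, simp add: ak)
    next
      case False
      then show ?thesis
        by (simp only: False if_False) (intro tendsto_intros t1 t2 t3, simp add: ak)
    qed
  qed
qed



theorem lemma2:
  fixes M :: "(complex ^ 'n) set"
  assumes "strictly_C_convex M"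
  shows "local_embedding_dual M (complex_dual M)"
  unfolding local_embedding_dual_def
proof
  fix x assume xM: "x \<in> M"
  have hs: "real_hypersurface M" and sc: "\<And>y. y \<in> M \<Longrightarrow> \<exists>V n Dn. open V \<and> y \<in> V \<and>
        (\<forall>z\<in>M \<inter> V. norm (n z) = 1 \<and> (\<forall>w\<in>tangent_space M z. n z \<bullet> w = 0)) \<and>
        (n has_derivative Dn) (at y within M \<inter> V) \<and>
        (\<forall>v\<in>complex_tangent M y. v \<noteq> 0 \<longrightarrow> - (Dn v \<bullet> v) > 0)"
  proof -
    show "real_hypersurface M" using assms unfolding strictly_C_convex_def by simp
    fix y assume "y \<in> M"
    then show "\<exists>V n Dn. open V \<and> y \<in> V \<and>
        (\<forall>z\<in>M \<inter> V. norm (n z) = 1 \<and> (\<forall>w\<in>tangent_space M z. n z \<bullet> w = 0)) \<and>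
        (n has_derivative Dn) (at y within M \<inter> V) \<and>
        (\<forall>v\<in>complex_tangent M y. v \<noteq> 0 \<longrightarrow> - (Dn v \<bullet> v) > 0)"
      using assms unfolding strictly_C_convex_def by (elim conjE ballE) auto
  qed
  have "\<exists>U \<rho>. open U \<and> x \<in> U \<and> C2_on U \<rho> \<and> M \<inter> U = {y\<in>U. \<rho> y = 0} \<and>
      (\<forall>y\<in>M \<inter> U. \<exists>L. (\<rho> has_derivative L) (at y) \<and> L \<noteq> (\<lambda>_. 0))"
    using hs xM unfolding real_hypersurface_def by (rule bspec)
  then obtain U \<rho> where U: "open U" "x \<in> U" and C2: "C2_on U \<rho>" and MU: "M \<inter> U = {y\<in>U. \<rho> y = 0}"
    and reg0: "\<forall>y\<in>M \<inter> U. \<exists>L. (\<rho> has_derivative L) (at y) \<and> L \<noteq> (\<lambda>_. 0)"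
    by blast
  have reg: "\<exists>L. (\<rho> has_derivative L) (at y) \<and> L \<noteq> (\<lambda>_. 0)" if "y \<in> M \<inter> U" for y
    using reg0 that by blast
  obtain \<rho>' :: "complex^'n \<Rightarrow> ((complex^'n) \<Rightarrow>\<^sub>L real)" and \<rho>'' where
    d1: "\<And>y. y \<in> U \<Longrightarrow> (\<rho> has_derivative blinfun_apply (\<rho>' y)) (at y)" and
    d2: "\<And>y. y \<in> U \<Longrightarrow> (\<rho>' has_derivative blinfun_apply (\<rho>'' y)) (at y)" and
    c2: "continuous_on U \<rho>''"
    using C2 unfolding C2_on_def by blast
  have contr: "continuous_on U \<rho>"
    by (rule has_derivative_continuous_on[of U \<rho> "\<lambda>y. blinfun_apply (\<rho>' y)"]) (use d1 has_derivative_at_withinI in blast)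
  have lin: "linear (blinfun_apply (\<rho>' y))" for y
    by (simp add: blinfun.bounded_linear_right bounded_linear.linear)
  have nz: "blinfun_apply (\<rho>' y) \<noteq> (\<lambda>_. 0)" if yy: "y \<in> M \<inter> U" for y
  proof -
    obtain L where "(\<rho> has_derivative L) (at y)" "L \<noteq> (\<lambda>_. 0)" using reg[OF yy] by blast
    moreover have "L = blinfun_apply (\<rho>' y)" using has_derivative_unique d1 yy calculation(1) by blast
    ultimately show ?thesis by simp
  qed
  have T: "tangent_space M y = {v. blinfun_apply (\<rho>' y) v = 0}" if "y \<in> M \<inter> U" for y
    using tangent_eq[OF U(1) _ _ MU contr d1 nz[OF that]] that by blast
  have CT: "complex_tangent M y = {v. cform (blinfun_apply (\<rho>' y)) v = 0}" if "y \<in> M \<inter> U" for y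
    using complex_tangent_eq[OF T[OF that] lin] .
  have "\<exists>k. acoef (blinfun_apply (\<rho>' x)) k \<noteq> 0"
  proof (rule ccontr)
    assume "\<not> ?thesis"
    then have "cform (blinfun_apply (\<rho>' x)) v = 0" for v by (simp add: cform_def)
    then have "blinfun_apply (\<rho>' x) v = 0" for v using lin_repr[OF lin] by simp
    then show False using nz[of x] xM U by auto
  qed
  then obtain k where ak: "acoef (blinfun_apply (\<rho>' x)) k \<noteq> 0" by blast
  have ic1: "isCont \<rho>' z" if "z \<in> U" for z using has_derivative_continuous[OF d2[OF that]] .
  have ic2: "isCont \<rho>'' x" using c2 U continuous_on_eq_continuous_at by blast
  obtain r1 where r1: "r1 > 0" "\<And>z. dist z x < r1 \<Longrightarrow> acoef (blinfun_apply (\<rho>' z)) k \<in> - {0}"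
    using cont_ball_pre[OF isCont_acoef[OF ic1[OF U(2)]], of "- {0}" k] ak by auto
  obtain r0 where r0: "r0 > 0" "ball x r0 \<subseteq> U" using U openE by blast
  define S where "S = ball x (min r0 r1)"
  have S: "open S" "x \<in> S" "S \<subseteq> U" using r0 r1 by (auto simp: S_def)
  have akS: "acoef (blinfun_apply (\<rho>' z)) k \<noteq> 0" if "z \<in> S" for z
    using r1(2)[of z] that by (auto simp: S_def dist_commute)
  define G where "G z = chartc (blinfun_apply (\<rho>' z)) k z" for z
  define DG where "DG z h = DGv (acoef (blinfun_apply (\<rho>' z))) (\<lambda>j. acoef (blinfun_apply (blinfun_apply (\<rho>'' z) h)) j) k z h" for z h
  have dG: "(G has_derivative DG z) (at z)" if "z \<in> S" for z
    unfolding G_def DG_def using dG[OF d2 akS[OF that]] that S by blast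
  have gG: "complex_dual M y \<in> chart_dom k \<and> dual_chart k (complex_dual M y) = G y" if "y \<in> M \<inter> S" for y
  proof -
    have yU: "y \<in> M \<inter> U" using that S by auto
    have yS: "y \<in> S" using that by blast
    have "is_chart_coord k ((\<lambda>v. y + v) ` {v. cform (blinfun_apply (\<rho>' y)) v = 0}) (chartc (blinfun_apply (\<rho>' y)) k y)"
      by (rule dual_hyper[OF akS[OF yS]])
    then have c: "is_chart_coord k (complex_dual M y) (G y)"
      unfolding complex_dual_def CT[OF yU] G_def .
    then have "complex_dual M y \<in> chart_dom k" unfolding chart_dom_def by blast
    then show ?thesis using dual_chart_eq[OF c] by blast
  qed
  have injT: "h = 0" if y: "y \<in> M \<inter> S" and h1: "blinfun_apply (\<rho>' y) h = 0" and h2: "DG y h = 0" for y h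
  proof (rule ccontr)
    assume hne: "h \<noteq> 0"
    have yU: "y \<in> M \<inter> U" using y S by auto
    let ?a = "acoef (blinfun_apply (\<rho>' y))"
    let ?a' = "\<lambda>j. acoef (blinfun_apply (blinfun_apply (\<rho>'' y) h)) j"
    have z: "DGv ?a ?a' k y h = 0" using h2 by (simp add: DG_def)
    note ay = akS[of y] y
    have lam: "\<forall>j. ?a' j = (?a' k / ?a k) * ?a j" using DGv_zero(1)[OF _ z] ay by blast
    have cf: "cform (blinfun_apply (\<rho>' y)) h = 0" using DGv_zero(2)[OF _ z] ay by (simp add: cform_def)
    define c where "c = ?a' k / ?a k"
    have lam': "?a' j = c * ?a j" for j unfolding c_def by (rule lam[rule_format])
    have "cform (blinfun_apply (blinfun_apply (\<rho>'' y) h)) h = c * cform (blinfun_apply (\<rho>' y)) h"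
      unfolding cform_def by (simp add: lam' sum_distrib_left mult.assoc)
    then have H0: "blinfun_apply (blinfun_apply (\<rho>'' y) h) h = 0"
    proof -
      have "linear (blinfun_apply (blinfun_apply (\<rho>'' y) h))"
        by (simp add: blinfun.bounded_linear_right bounded_linear.linear)
      from lin_repr[OF this, of h] show ?thesis using cf \<open>cform _ h = c * _\<close> by simp
    qed
    have hCT: "h \<in> complex_tangent M y" using CT[OF yU] cf by simp
    obtain V n Dn where V: "open V" "y \<in> V"
      and nn: "\<forall>z\<in>M \<inter> V. norm (n z) = 1 \<and> (\<forall>w\<in>tangent_space M z. n z \<bullet> w = 0)"
      and dn: "(n has_derivative Dn) (at y within M \<inter> V)"
      and pos: "\<forall>v\<in>complex_tangent M y. v \<noteq> 0 \<longrightarrow> - (Dn v \<bullet> v) > 0"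
      using sc[of y] y by blast
    obtain u where u: "blinfun_apply (\<rho>' y) u \<noteq> 0" using nz[OF yU] by auto
    have perp: "n z \<bullet> w = 0" if "z \<in> M \<inter> (V \<inter> U)" "blinfun_apply (\<rho>' z) w = 0" for z w
    proof -
      have "w \<in> tangent_space M z" using T[of z] that by auto
      then show ?thesis using nn that by auto
    qed
    have hT: "h \<in> tangent_space M y" using T[OF yU] h1 by simp
    have "Dn h \<bullet> h = 0"
      by (rule shape_zero[of "V \<inter> U" y M \<rho>' n Dn V, OF _ _ _ perp dn _ d2 hT h1 u H0])
         (use V U yU in auto)
    then show False using pos hCT hne by auto
  qed
  define F where "F z = (G z, \<rho> z)" for z
  define F' where "F' z h = (DG z h, blinfun_apply (\<rho>' z) h)" for z h
  have dF: "(F has_derivative F' z) (at z)" if zS: "z \<in> S" for z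
  proof -
    have "((\<lambda>z. (G z, \<rho> z)) has_derivative (\<lambda>h. (DG z h, blinfun_apply (\<rho>' z) h))) (at z)"
      using dG[OF zS] d1 S zS by (intro has_derivative_Pair) auto
    then show ?thesis unfolding F_def[abs_def] F'_def[abs_def] .
  qed
  have blF: "bounded_linear (F' z)" if "z \<in> S" for z using has_derivative_bounded_linear[OF dF[OF that]] .
  have blDG: "bounded_linear (DG z)" if "z \<in> S" for z using has_derivative_bounded_linear[OF dG[OF that]] .
  have linF: "linear (F' x)" using blF[OF S(2)] bounded_linear.linear by blast
  have injF: "inj (F' x)"
  proof (rule injI)
    fix a b assume ab: "F' x a = F' x b"
    have "F' x (a - b) = F' x a - F' x b" using linF by (simp add: linear_diff)
    then have "F' x (a - b) = 0" using ab by simp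
    then have "DG x (a - b) = 0" "blinfun_apply (\<rho>' x) (a - b) = 0" by (simp_all add: F'_def zero_prod_def)
    then have "a - b = 0" using injT[of x "a - b"] xM S(2) by blast
    then show "a = b" by simp
  qed
  obtain g' where g': "linear g'" "g' \<circ> F' x = id"
    using linear_injective_left_inverse[OF linF injF] by blast
  have blg': "bounded_linear g'" using g'(1) linear_conv_bounded_linear by blast
  have contF': "isCont (\<lambda>z. F' z b) x" for b
    unfolding F'_def DG_def
    by (intro continuous_Pair DGv_cont ic1 ic2 ak isCont_bl_apply U(2))
  have onc: "\<exists>d>0. \<forall>z. dist x z < d \<longrightarrow> onorm (\<lambda>v. F' z v - F' x v) < e" if e: "e > 0" for e
  proof -
    define \<phi> where "\<phi> z = (\<Sum>b\<in>Basis. norm (F' z b - F' x b))" for z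
    have "isCont \<phi> x" unfolding \<phi>_def by (intro continuous_intros contF')
    then obtain d where d: "d > 0" "\<And>z. dist z x < d \<Longrightarrow> dist (\<phi> z) (\<phi> x) < e"
      using e unfolding continuous_at_eps_delta by blast
    have \<phi>x: "\<phi> x = 0" by (simp add: \<phi>_def)
    obtain r where r: "r > 0" "ball x r \<subseteq> S" using S openE by blast
    show ?thesis
    proof (intro exI[of _ "min d r"] conjI allI impI)
      show "min d r > 0" using d r by simp
      fix z assume "dist x z < min d r"
      then have zS: "z \<in> S" and zd: "dist z x < d" using r by (auto simp: dist_commute)
      have "linear (\<lambda>v. F' z v - F' x v)"
        using bounded_linear_sub[OF blF[OF zS] blF[OF S(2)]] bounded_linear.linear by blast
      then have "onorm (\<lambda>v. F' z v - F' x v) \<le> \<phi> z" unfolding \<phi>_def by (rule onorm_le_basis)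
      also have "\<phi> z < e" using d(2)[OF zd] \<phi>x by simp
      finally show "onorm (\<lambda>v. F' z v - F' x v) < e" .
    qed
  qed
  obtain r3 where r3: "r3 > 0" "ball x r3 \<subseteq> S" "inj_on F (ball x r3)"
    using has_derivative_locally_injective[OF S(2) S(1) blg' g'(2) dF onc] by blast
  define r where "r = r3 / 2"
  have r: "r > 0" "cball x r \<subseteq> ball x r3" using r3 by (auto simp: r_def)
  define K where "K = M \<inter> cball x r"
  have KS: "K \<subseteq> S" "K \<subseteq> ball x r3" using r r3 by (auto simp: K_def)
  have cU: "cball x r \<subseteq> U" using r(2) r3(2) S(3) by blast
  have Mz: "z \<in> M \<longleftrightarrow> \<rho> z = 0" if "z \<in> U" for z
  proof -
    have "z \<in> M \<inter> U \<longleftrightarrow> z \<in> {y\<in>U. \<rho> y = 0}" using MU by simp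
    then show ?thesis using that by simp
  qed
  have KU: "K = {z \<in> cball x r. \<rho> z = 0}" unfolding K_def using Mz cU by auto
  have Kc: "compact K"
  proof -
    have "continuous_on (cball x r) \<rho>" using continuous_on_subset[OF contr cU] .
    then have "closed {z \<in> cball x r. \<rho> z = 0}" by (rule continuous_closed_preimage_constant) simp
    then have "compact (cball x r \<inter> {z \<in> cball x r. \<rho> z = 0})" by (intro compact_Int_closed) auto
    moreover have "cball x r \<inter> {z \<in> cball x r. \<rho> z = 0} = {z \<in> cball x r. \<rho> z = 0}" by blast
    ultimately show ?thesis unfolding KU by simp
  qed
  define g where "g = dual_chart k \<circ> complex_dual M"
  have gK: "g z = G z" if zK: "z \<in> K" for z
  proof -
    have "z \<in> M \<inter> S" using zK KS(1) unfolding K_def by blast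
    from gG[OF this] show ?thesis by (simp add: g_def)
  qed
  have injK: "inj_on g K"
  proof (rule inj_onI)
    fix z z' assume zz: "z \<in> K" "z' \<in> K" "g z = g z'"
    have "G z = G z'" using zz(3) by (simp only: gK[OF zz(1)] gK[OF zz(2)])
    moreover have "\<rho> z = 0" "\<rho> z' = 0" using zz(1,2) unfolding KU by simp_all
    ultimately have "F z = F z'" by (simp add: F_def)
    moreover have "z \<in> ball x r3" "z' \<in> ball x r3" using zz(1,2) KS(2) by blast+
    ultimately show "z = z'" using inj_onD[OF r3(3)] by blast
  qed
  have contS: "continuous_on S G"
    by (rule has_derivative_continuous_on[of S G DG]) (use dG has_derivative_at_withinI in blast)
  have contK: "continuous_on K g"
    using continuous_on_subset[OF contS KS(1)] gK continuous_on_cong by blast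
  have invK: "continuous_on (g ` K) (inv_into K g)"
    by (rule continuous_on_inv[OF contK Kc]) (simp add: injK)
  have MV: "M \<inter> ball x r \<subseteq> K" by (auto simp: K_def)
  have injV: "inj_on g (M \<inter> ball x r)" using inj_on_subset[OF injK MV] .
  show "\<exists>V k. open V \<and> x \<in> V \<and> (\<forall>y\<in>M \<inter> V. complex_dual M y \<in> chart_dom k) \<and>
      (let g = dual_chart k \<circ> complex_dual M in
        inj_on g (M \<inter> V) \<and>
        continuous_on (M \<inter> V) g \<and>
        continuous_on (g ` (M \<inter> V)) (inv_into (M \<inter> V) g) \<and>
        (\<forall>y\<in>M \<inter> V. \<exists>L. (g has_derivative L) (at y within M) \<and>
                        inj_on L (tangent_space M y)))"
  proof (unfold Let_def, intro exI[of _ "ball x r"] exI[of _ k] conjI ballI, fold g_def)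
    show "open (ball x r)" by simp
    show "x \<in> ball x r" using r by simp
    show "complex_dual M y \<in> chart_dom k" if "y \<in> M \<inter> ball x r" for y
      using gG[of y] that MV KS by blast
    show "inj_on g (M \<inter> ball x r)" by (rule injV)
    show "continuous_on (M \<inter> ball x r) g" using continuous_on_subset[OF contK MV] .
    show "continuous_on (g ` (M \<inter> ball x r)) (inv_into (M \<inter> ball x r) g)"
    proof (rule continuous_on_cong[THEN iffD1, OF refl _ continuous_on_subset[OF invK image_mono[OF MV]]])
      fix w assume "w \<in> g ` (M \<inter> ball x r)"
      then obtain z where z: "z \<in> M \<inter> ball x r" "w = g z" by blast
      show "inv_into K g w = inv_into (M \<inter> ball x r) g w"
        using inv_into_f_f[OF injK] inv_into_f_f[OF injV] z MV by auto
    qed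
    show "\<exists>L. (g has_derivative L) (at y within M) \<and> inj_on L (tangent_space M y)"
      if y: "y \<in> M \<inter> ball x r" for y
    proof (intro exI conjI)
      have yS: "y \<in> S" "y \<in> K" using y MV KS by auto
      have yU: "y \<in> M \<inter> U" using yS y S by auto
      show "(g has_derivative DG y) (at y within M)"
      proof (rule has_derivative_transform_within[OF has_derivative_at_withinI[OF dG[OF yS(1)]]])
        show "0 < r - dist y x" using y by (simp add: dist_commute)
        show "y \<in> M" using y by simp
        fix z assume "z \<in> M" "dist z y < r - dist y x"
        then have "z \<in> K" unfolding K_def using dist_triangle[of z x y]
          by (auto simp: dist_commute)
        then show "G z = g z" using gK by simp
      qed
      show "inj_on (DG y) (tangent_space M y)"
      proof (rule inj_onI)
        fix a b assume ab: "a \<in> tangent_space M y" "b \<in> tangent_space M y" "DG y a = DG y b"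
        have "DG y (a - b) = 0" using ab(3) blDG[OF yS(1)] by (simp add: linear_simps)
        moreover have "blinfun_apply (\<rho>' y) (a - b) = 0" using ab T[OF yU] by (simp add: blinfun.diff_right)
        ultimately have "a - b = 0" using injT[of y "a - b"] y yS by blast
        then show "a = b" by simp
      qed
    qed
  qed
qed

end
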